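(* Let $\mathcal{G}$ be a multi-layer graph with $l$ layers, $d,s,k\in\mathbb{N}$ with $k\ge1$, and $\mathcal{R}$ a collection of exactly $k$ subsets of $V(\mathcal{G})$. Let $L\subseteq\{1,\dots,l\}$, let $j\in L$ with $j>\max(\{1,\dots,l\}-L)$, and let $U$ be a potential vertex set for $L-\{j\}$, i.e., $U\subseteq V(\mathcal{G})$ with $C^d_S(\mathcal{G})\subseteq U$ for every $S$ with $|S|=s$ that equals $L-\{j\}$ or is a top-down descendant of $L-\{j\}$. If $|U|<\frac1k|\mathsf{Cov}(\mathcal{R})|+|\Delta(\mathcal{R},C^*(\mathcal{R}))|$, then every such $S$ satisfies $|\mathsf{Cov}((\mathcal{R}-\{C^*(\mathcal{R})\})\cup\{C^d_S(\mathcal{G})\})|<(1+\frac1k)|\mathsf{Cov}(\mathcal{R})|$.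
   Context: A multi-layer graph $\mathcal{G}=(V,E_1,\dots,E_l)$ consists of a finite vertex set $V$ and edge sets $E_i$ of simple undirected graphs $G_i=(V,E_i)$. A graph is $d$-dense if every vertex has degree at least $d$; the $d$-coherent core $C^d_L(\mathcal{G})$ is the unique maximal $S\subseteq V$ such that the induced subgraph $G_i[S]$ is $d$-dense for all $i\in L$. Top-down search tree: $L$ is the parent of $L'$ if $L'=L-\{\ell\}$ for some $\ell\in L$ with $\ell>\max(\{1,\dots,l\}-L)$ ($\max(\emptyset)=-\infty$); top-down descendants are obtained by iterating the child relation. For a collection $\mathcal{R}$ of sets, $\mathsf{Cov}(\mathcal{R})=\bigcup_{R\in\mathcal{R}}R$; for $C'\in\mathcal{R}$, $\Delta(\mathcal{R},C')=C'-\mathsf{Cov}(\mathcal{R}-\{C'\})$; $C^*(\mathcal{R})$ is a fixed element of $\mathcal{R}$ minimizing $|\Delta(\mathcal{R},C')|$. *)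

theory Defs
  imports Complex_Main
begin

definition multilayer_graph :: "'a set \<Rightarrow> nat \<Rightarrow> (nat \<Rightarrow> 'a \<Rightarrow> 'a \<Rightarrow> bool) \<Rightarrow> bool" where
  "multilayer_graph V l E \<longleftrightarrow> finite V \<and>
     (\<forall>i\<in>{1..l}. (\<forall>u v. E i u v \<longrightarrow> u \<in> V \<and> v \<in> V) \<and>
                   (\<forall>u v. E i u v \<longrightarrow> E i v u) \<and> (\<forall>u. \<not> E i u u))"

definition dense_induced :: "('a \<Rightarrow> 'a \<Rightarrow> bool) \<Rightarrow> 'a set \<Rightarrow> nat \<Rightarrow> bool" where
  "dense_induced Ei S d \<longleftrightarrow> (\<forall>v\<in>S. card {u\<in>S. Ei v u} \<ge> d)"

definition coherent :: "'a set \<Rightarrow> (nat \<Rightarrow> 'a \<Rightarrow> 'a \<Rightarrow> bool) \<Rightarrow> nat \<Rightarrow> nat set \<Rightarrow> 'a set \<Rightarrow> bool" where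
  "coherent V E d L S \<longleftrightarrow> S \<subseteq> V \<and> (\<forall>i\<in>L. dense_induced (E i) S d)"

definition core :: "'a set \<Rightarrow> (nat \<Rightarrow> 'a \<Rightarrow> 'a \<Rightarrow> bool) \<Rightarrow> nat \<Rightarrow> nat set \<Rightarrow> 'a set" where
  "core V E d L = (THE S. coherent V E d L S \<and> (\<forall>T. coherent V E d L T \<longrightarrow> T \<subseteq> S))"

text \<open>Top-down search tree: td_child l L L' iff L is the parent of L'.
  The condition ell > max({1..l} - L) with max of the empty set = -infinity.\<close>
definition td_child :: "nat \<Rightarrow> nat set \<Rightarrow> nat set \<Rightarrow> bool" where
  "td_child l L L' \<longleftrightarrow> (\<exists>ell\<in>L. L' = L - {ell} \<and> (\<forall>m\<in>{1..l} - L. m < ell))"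

definition td_descendant :: "nat \<Rightarrow> nat set \<Rightarrow> nat set \<Rightarrow> bool" where
  "td_descendant l L L' \<longleftrightarrow> (td_child l)\<^sup>+\<^sup>+ L L'"

definition Cov :: "'a set set \<Rightarrow> 'a set" where
  "Cov R = \<Union>R"

definition Delta :: "'a set set \<Rightarrow> 'a set \<Rightarrow> 'a set" where
  "Delta R C' = C' - Cov (R - {C'})"

end

theory Submission
  imports Defs
begin

theorem lemma6:
  fixes V :: "'a set" and l :: nat and E :: "nat \<Rightarrow> 'a \<Rightarrow> 'a \<Rightarrow> bool"
    and d s k :: nat and R :: "'a set set" and Cstar :: "'a set"
    and L :: "nat set" and j :: nat and U :: "'a set"
  assumes G: "multilayer_graph V l E"
    and k: "k \<ge> 1" and R_card: "card R = k" and R_sub: "\<forall>C\<in>R. C \<subseteq> V"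
    and Cstar_in: "Cstar \<in> R"
    and Cstar_min: "\<forall>C'\<in>R. card (Delta R Cstar) \<le> card (Delta R C')"
    and L: "L \<subseteq> {1..l}" and j: "j \<in> L" and j_gt: "\<forall>m\<in>{1..l} - L. m < j"
    and U_sub: "U \<subseteq> V"
    and U_pot: "\<forall>S. card S = s \<and> (S = L - {j} \<or> td_descendant l (L - {j}) S)
                    \<longrightarrow> core V E d S \<subseteq> U"
    and small: "real (card U) < real (card (Cov R)) / real k + real (card (Delta R Cstar))"
  shows "\<forall>S. card S = s \<and> (S = L - {j} \<or> td_descendant l (L - {j}) S) \<longrightarrow>
           real (card (Cov ((R - {Cstar}) \<union> {core V E d S})))
             < (1 + 1 / real k) * real (card (Cov R))"
proof (intro allI impI)
  fix S assume hS: "card S = s \<and> (S = L - {j} \<or> td_descendant l (L - {j}) S)"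
  have finV: "finite V" using G unfolding multilayer_graph_def by simp
  have CU: "core V E d S \<subseteq> U" using U_pot hS by blast
  have finU: "finite U" using finV U_sub finite_subset by blast
  have covRV: "Cov R \<subseteq> V" using R_sub unfolding Cov_def by blast
  have finCov: "finite (Cov R)" using covRV finV finite_subset by blast
  define A where "A = Cov (R - {Cstar})"
  have AR: "A \<subseteq> Cov R" unfolding A_def Cov_def by blast
  have finA: "finite A" using AR finCov finite_subset by blast
  have eq: "Cov R = A \<union> Delta R Cstar" using Cstar_in unfolding A_def Delta_def Cov_def by blast
  have disj: "A \<inter> Delta R Cstar = {}" unfolding A_def Delta_def by blast
  have finD: "finite (Delta R Cstar)" using eq finCov by (metis finite_Un)
  have c1: "card (Cov R) = card A + card (Delta R Cstar)"
    using eq disj finA finD card_Un_disjoint by metis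
  have sub: "Cov ((R - {Cstar}) \<union> {core V E d S}) \<subseteq> A \<union> U"
    using CU unfolding A_def Cov_def by blast
  have "card (Cov ((R - {Cstar}) \<union> {core V E d S})) \<le> card (A \<union> U)"
    using sub finA finU by (simp add: card_mono)
  also have "\<dots> \<le> card A + card U" by (rule card_Un_le)
  finally have c2: "real (card (Cov ((R - {Cstar}) \<union> {core V E d S}))) \<le> real (card A) + real (card U)"
    by linarith
  have kpos: "real k > 0" using k by simp
  have "(1 + 1 / real k) * real (card (Cov R)) = real (card (Cov R)) + real (card (Cov R)) / real k"
    using kpos by (simp add: field_simps)
  then show "real (card (Cov ((R - {Cstar}) \<union> {core V E d S}))) < (1 + 1 / real k) * real (card (Cov R))"
    using c1 c2 small by linarith
qed

end
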